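(* Let $k$ be an algebraically closed field of characteristic $2$, $S=\mathbf{V}(f)\subset\mathbb{A}^3$ with $f = x^2+y^2z+yz^2$, and $m\ge 5$. Let $R_m = k[x_0,\dots,x_m,y_0,\dots,y_m,z_0,\dots,z_m]$, $(\mathbb{A}^3)_m=\mathrm{Spec}\,R_m$, and define $f^{(j)}\in R_m$ by $f(\sum_{i=0}^m x_it^i,\sum_{i=0}^m y_it^i,\sum_{i=0}^m z_it^i) = \sum_{j=0}^m f^{(j)}t^j$ in $R_m[t]/\langle t^{m+1}\rangle$. Let $S_m^0 = \mathbf{V}(x_0,y_0,z_0,f^{(0)},\dots,f^{(m)})\subseteq(\mathbb{A}^3)_m$ be the singular fiber of the $m$-th jet scheme $S_m=\mathrm{Spec}\,R_m/\langle f^{(0)},\dots,f^{(m)}\rangle$. Define $I_m^0 = \langle x_0,x_1,x_2,y_0,y_1,z_0,z_1\rangle + \langle f^{(0)},\dots,f^{(m)}\rangle$, $I_m^1 = J_m^1 (R_m)_{z_1}\cap R_m$, $I_m^2 = J_m^2 (R_m)_{y_1}\cap R_m$, $I_m^3 = J_m^3 (R_m)_{y_1}\cap R_m$, where $J_m^1 = \langle x_0,x_1,y_0,y_1,z_0\rangle + \langle f^{(0)},\dots,f^{(m)}\rangle$, $J_m^2 = \langle x_0,x_1,y_0,z_0,z_1\rangle + \langle f^{(0)},\dots,f^{(m)}\rangle$, $J_m^3 = \langle x_0,x_1,y_0,z_0,y_1+z_1\rangle + \langle f^{(0)},\dots,f^{(m)}\rangle$, and $Z_m^i = \mathbf{V}(I_m^i)$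 for $i=0,1,2,3$ (these are the irreducible components of $S_m^0$). Then the maximal elements of $\{Z_m^i\cap Z_m^j \mid i,j\in\{0,1,2,3\},\ i\ne j\}$ with respect to inclusion are $Z_m^0\cap Z_m^1$, $Z_m^0\cap Z_m^2$ and $Z_m^0\cap Z_m^3$, and these three sets are pairwise distinct. In particular $Z_m^1\cap Z_m^2,\ Z_m^2\cap Z_m^3,\ Z_m^3\cap Z_m^1\subsetneq Z_m^0$.
   Context: $(R_m)_h$ is the localization of $R_m$ at powers of $h$; $\mathbf{V}(\cdot)$ denotes zero sets in $(\mathbb{A}^3)_m$. *)

theory Defs
  imports "HOL-Library.Poly_Mapping" "HOL-Computational_Algebra.Polynomial"
begin

datatype jvar = X nat | Y nat | Z nat

fun jidx :: "jvar \<Rightarrow> nat" where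
  "jidx (X i) = i" | "jidx (Y i) = i" | "jidx (Z i) = i"

type_synonym 'k mpoly = "(jvar \<Rightarrow>\<^sub>0 nat) \<Rightarrow>\<^sub>0 'k"

definition Var :: "jvar \<Rightarrow> 'k::comm_ring_1 mpoly" where
  "Var v = Poly_Mapping.single (Poly_Mapping.single v 1) 1"

definition mpeval :: "(jvar \<Rightarrow> 'k::comm_ring_1) \<Rightarrow> 'k mpoly \<Rightarrow> 'k" where
  "mpeval a p = (\<Sum>mon\<in>Poly_Mapping.keys p. Poly_Mapping.lookup p mon * (\<Prod>v\<in>Poly_Mapping.keys (mon::jvar \<Rightarrow>\<^sub>0 nat). a v ^ Poly_Mapping.lookup mon v))"

definition Rm :: "nat \<Rightarrow> 'k::comm_ring_1 mpoly set" where
  "Rm m = {p. \<forall>mon\<in>Poly_Mapping.keys p. \<forall>v\<in>Poly_Mapping.keys (mon::jvar \<Rightarrow>\<^sub>0 nat). jidx v \<le> m}"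

definition gen_ideal :: "nat \<Rightarrow> 'k::comm_ring_1 mpoly set \<Rightarrow> 'k mpoly set" where
  "gen_ideal m G = {\<Sum>g\<in>F. c g * g | F c. finite F \<and> F \<subseteq> G \<and> (\<forall>g\<in>F. c g \<in> Rm m)}"

(* J R_h \<inter> R for an ideal J of R = R_m and h in R *)
definition sat :: "nat \<Rightarrow> 'k::comm_ring_1 mpoly set \<Rightarrow> 'k mpoly \<Rightarrow> 'k mpoly set" where
  "sat m J h = {g \<in> Rm m. \<exists>n::nat. h ^ n * g \<in> J}"

definition arc :: "nat \<Rightarrow> (nat \<Rightarrow> jvar) \<Rightarrow> 'k::comm_ring_1 mpoly poly" where
  "arc m c = (\<Sum>i\<le>m. monom (Var (c i)) i)"

definition fj :: "nat \<Rightarrow> nat \<Rightarrow> 'k::comm_ring_1 mpoly" where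
  "fj m j = coeff (arc m X ^ 2 + arc m Y ^ 2 * arc m Z + arc m Y * arc m Z ^ 2) j"

definition Fm :: "nat \<Rightarrow> 'k::comm_ring_1 mpoly set" where
  "Fm m = {fj m j | j. j \<le> m}"

definition Am :: "nat \<Rightarrow> (jvar \<Rightarrow> 'k::comm_ring_1) set" where
  "Am m = {a. \<forall>v. m < jidx v \<longrightarrow> a v = 0}"

definition Vm :: "nat \<Rightarrow> 'k::comm_ring_1 mpoly set \<Rightarrow> (jvar \<Rightarrow> 'k) set" where
  "Vm m I = {a \<in> Am m. \<forall>p\<in>I. mpeval a p = 0}"

definition Im0 :: "nat \<Rightarrow> 'k::comm_ring_1 mpoly set" where
  "Im0 m = gen_ideal m ({Var (X 0), Var (X 1), Var (X 2), Var (Y 0), Var (Y 1), Var (Z 0), Var (Z 1)} \<union> Fm m)"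

definition Jm1 :: "nat \<Rightarrow> 'k::comm_ring_1 mpoly set" where
  "Jm1 m = gen_ideal m ({Var (X 0), Var (X 1), Var (Y 0), Var (Y 1), Var (Z 0)} \<union> Fm m)"

definition Jm2 :: "nat \<Rightarrow> 'k::comm_ring_1 mpoly set" where
  "Jm2 m = gen_ideal m ({Var (X 0), Var (X 1), Var (Y 0), Var (Z 0), Var (Z 1)} \<union> Fm m)"

definition Jm3 :: "nat \<Rightarrow> 'k::comm_ring_1 mpoly set" where
  "Jm3 m = gen_ideal m ({Var (X 0), Var (X 1), Var (Y 0), Var (Z 0), Var (Y 1) + Var (Z 1)} \<union> Fm m)"

definition Im :: "nat \<Rightarrow> nat \<Rightarrow> 'k::comm_ring_1 mpoly set" where
  "Im m i = (if i = 0 then Im0 m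
             else if i = 1 then sat m (Jm1 m) (Var (Z 1))
             else if i = 2 then sat m (Jm2 m) (Var (Y 1))
             else sat m (Jm3 m) (Var (Y 1)))"

definition Zm :: "nat \<Rightarrow> nat \<Rightarrow> (jvar \<Rightarrow> 'k::comm_ring_1) set" where
  "Zm m i = Vm m (Im m i)"

end

theory Submission
  imports Defs
begin


definition monv :: "(jvar \<Rightarrow> 'b::comm_ring_1) \<Rightarrow> (jvar \<Rightarrow>\<^sub>0 nat) \<Rightarrow> 'b" where
  "monv A mon = (\<Prod>v\<in>Poly_Mapping.keys mon. A v ^ Poly_Mapping.lookup mon v)"

definition evP :: "(jvar \<Rightarrow> 'k::comm_ring_1 poly) \<Rightarrow> 'k mpoly \<Rightarrow> 'k poly" where
  "evP A p = (\<Sum>mon\<in>Poly_Mapping.keys p. [:Poly_Mapping.lookup p mon:] * monv A mon)"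

lemma monv_superset:
  assumes "finite S" "Poly_Mapping.keys mon \<subseteq> S"
  shows "monv A mon = (\<Prod>v\<in>S. A v ^ Poly_Mapping.lookup mon v)"
  unfolding monv_def
  by (rule prod.mono_neutral_left) (use assms in \<open>auto simp: in_keys_iff\<close>)

lemma monv_add: "monv A (m1 + m2) = monv A m1 * monv A m2"
proof -
  let ?S = "Poly_Mapping.keys m1 \<union> Poly_Mapping.keys m2"
  have "monv A (m1 + m2) = (\<Prod>v\<in>?S. A v ^ Poly_Mapping.lookup (m1+m2) v)"
    by (rule monv_superset) (auto simp: keys_add)
  also have "\<dots> = (\<Prod>v\<in>?S. A v ^ Poly_Mapping.lookup m1 v) * (\<Prod>v\<in>?S. A v ^ Poly_Mapping.lookup m2 v)"
    by (simp add: lookup_add power_add prod.distrib)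
  also have "\<dots> = monv A m1 * monv A m2"
    by (subst (1 2) monv_superset[of ?S]) auto
  finally show ?thesis .
qed

lemma monv_zero [simp]: "monv A 0 = 1"
  by (simp add: monv_def)

lemma evP_superset:
  assumes "finite S" "Poly_Mapping.keys p \<subseteq> S"
  shows "evP A p = (\<Sum>mon\<in>S. [:Poly_Mapping.lookup p mon:] * monv A mon)"
  unfolding evP_def
  by (rule sum.mono_neutral_left) (use assms in \<open>auto simp: in_keys_iff\<close>)

lemma evP_add: "evP A (p + q) = evP A p + evP A q"
proof -
  let ?S = "Poly_Mapping.keys p \<union> Poly_Mapping.keys q"
  have "evP A (p + q) = (\<Sum>mon\<in>?S. [:Poly_Mapping.lookup (p+q) mon:] * monv A mon)"
    by (rule evP_superset) (auto simp: keys_add)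
  also have "\<dots> = (\<Sum>mon\<in>?S. [:Poly_Mapping.lookup p mon:] * monv A mon) + (\<Sum>mon\<in>?S. [:Poly_Mapping.lookup q mon:] * monv A mon)"
    by (simp add: lookup_add sum.distrib smult_add_left)
  also have "\<dots> = evP A p + evP A q"
    by (subst (1 2) evP_superset[of ?S]) auto
  finally show ?thesis .
qed

lemma evP_zero [simp]: "evP A 0 = 0"
  by (simp add: evP_def)

lemma evP_sum: "evP A (\<Sum>i\<in>I. f i) = (\<Sum>i\<in>I. evP A (f i))"
  by (induction I rule: infinite_finite_induct) (auto simp: evP_add)

lemma evP_single: "evP A (Poly_Mapping.single mon c) = [:c:] * monv A mon"
  by (simp add: evP_def)

lemma pm_expand: "p = (\<Sum>mon\<in>Poly_Mapping.keys p. Poly_Mapping.single mon (Poly_Mapping.lookup p mon))"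
  by (rule poly_mapping_eqI) (auto simp: lookup_sum lookup_single when_def in_keys_iff)

lemma evP_mult: "evP A (p * q) = evP A p * evP A q"
proof -
  have "p * q = (\<Sum>m1\<in>Poly_Mapping.keys p. \<Sum>m2\<in>Poly_Mapping.keys q.
          Poly_Mapping.single m1 (Poly_Mapping.lookup p m1) * Poly_Mapping.single m2 (Poly_Mapping.lookup q m2))"
    by (subst (1) pm_expand[of p], subst (1) pm_expand[of q]) (simp add: sum_product)
  then have "evP A (p * q) = (\<Sum>m1\<in>Poly_Mapping.keys p. \<Sum>m2\<in>Poly_Mapping.keys q.
          ([:Poly_Mapping.lookup p m1:] * monv A m1) * ([:Poly_Mapping.lookup q m2:] * monv A m2))"
    by (simp add: evP_sum mult_single evP_single monv_add algebra_simps flip: smult_pCons)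
  also have "\<dots> = evP A p * evP A q"
    by (simp add: evP_def sum_product)
  finally show ?thesis .
qed

lemma poly_evP: "poly (evP A p) s = mpeval (\<lambda>v. poly (A v) s) p"
  by (simp add: evP_def mpeval_def monv_def poly_sum poly_prod)

lemma mpeval_evP: "mpeval a p = poly (evP (\<lambda>v. [:a v:]) p) 0"
  by (simp add: poly_evP)

lemma mpeval_add [simp]: "mpeval a (p + q) = mpeval a p + mpeval a q"
  by (simp add: mpeval_evP evP_add)
lemma mpeval_mult [simp]: "mpeval a (p * q) = mpeval a p * mpeval a q"
  by (simp add: mpeval_evP evP_mult)
lemma mpeval_zero [simp]: "mpeval a 0 = 0"
  by (simp add: mpeval_def)
lemma mpeval_one [simp]: "mpeval a 1 = 1"
  by (simp add: mpeval_def)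
lemma mpeval_uminus [simp]: "mpeval a (- p) = - mpeval a p"
  using mpeval_add[of a p "-p"] by (simp add: eq_neg_iff_add_eq_0 add.commute)
lemma mpeval_diff [simp]: "mpeval a (p - q) = mpeval a p - mpeval a q"
  using mpeval_add[of a p "-q"] by simp
lemma mpeval_power [simp]: "mpeval a (p ^ n) = mpeval a p ^ n"
  by (induction n) auto
lemma mpeval_sum [simp]: "mpeval a (\<Sum>i\<in>I. f i) = (\<Sum>i\<in>I. mpeval a (f i))"
  by (induction I rule: infinite_finite_induct) auto
lemma mpeval_Var [simp]: "mpeval a (Var v) = a v"
  by (simp add: mpeval_def Var_def)



lemma Rm_add: "p \<in> Rm m \<Longrightarrow> q \<in> Rm m \<Longrightarrow> p + q \<in> Rm m"
  unfolding Rm_def using keys_add[of p q] by (simp add: subset_iff) (metis UnE)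

lemma Rm_zero [simp]: "0 \<in> Rm m" by (simp add: Rm_def)
lemma Rm_one [simp]: "1 \<in> Rm m" by (simp add: Rm_def)

lemma keys_uminus_pm: "Poly_Mapping.keys (- (p::'a \<Rightarrow>\<^sub>0 'b::ab_group_add)) = Poly_Mapping.keys p"
  by (auto simp: in_keys_iff)

lemma Rm_uminus: "p \<in> Rm m \<Longrightarrow> - p \<in> Rm m"
  unfolding Rm_def by (simp add: keys_uminus_pm)

lemma Rm_diff: "p \<in> Rm m \<Longrightarrow> q \<in> Rm m \<Longrightarrow> p - q \<in> Rm m"
  using Rm_add[OF _ Rm_uminus] by (metis diff_conv_add_uminus)

lemma Rm_mult:
  assumes p: "p \<in> Rm m" and q: "q \<in> Rm m"
  shows "p * q \<in> Rm m"
proof -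
  have "jidx v \<le> m" if mon: "mon \<in> Poly_Mapping.keys (p * q)" and v: "v \<in> Poly_Mapping.keys mon" for mon v
  proof -
    from mon keys_mult obtain a b where "mon = a + b" "a \<in> Poly_Mapping.keys p" "b \<in> Poly_Mapping.keys q"
      by blast
    with v keys_add[of a b] p q show "jidx v \<le> m" unfolding Rm_def by blast
  qed
  then show ?thesis unfolding Rm_def by blast
qed

lemma Rm_power: "p \<in> Rm m \<Longrightarrow> p ^ n \<in> Rm m"
  by (induction n) (auto intro: Rm_mult)

lemma Rm_sum: "(\<And>i. i \<in> I \<Longrightarrow> f i \<in> Rm m) \<Longrightarrow> (\<Sum>i\<in>I. f i) \<in> Rm m"
  by (induction I rule: infinite_finite_induct) (auto intro: Rm_add)

lemma Rm_Var: "jidx v \<le> m \<Longrightarrow> Var v \<in> Rm m"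
  by (simp add: Rm_def Var_def)

lemma gi_intro:
  assumes "finite F" "F \<subseteq> G" "\<forall>g\<in>F. c g \<in> Rm m"
  shows "(\<Sum>g\<in>F. c g * g) \<in> gen_ideal m G"
  unfolding gen_ideal_def using assms by blast

lemma gi_zero: "0 \<in> gen_ideal m G"
  unfolding gen_ideal_def by (rule CollectI, rule exI[of _ "{}"]) auto

lemma gi_gen: "g \<in> G \<Longrightarrow> c \<in> Rm m \<Longrightarrow> c * g \<in> gen_ideal m G"
  unfolding gen_ideal_def
  by (rule CollectI, rule exI[of _ "{g}"], rule exI[of _ "\<lambda>_. c"]) auto

lemma gi_gen1: "g \<in> G \<Longrightarrow> g \<in> gen_ideal m G"
  using gi_gen[of g G 1 m] by simp

lemma gi_add:
  assumes "p \<in> gen_ideal m G" "q \<in> gen_ideal m G"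
  shows "p + q \<in> gen_ideal m G"
proof -
  from assms(1) obtain F1 c1 where 1: "p = (\<Sum>g\<in>F1. c1 g * g)" "finite F1" "F1 \<subseteq> G" "\<forall>g\<in>F1. c1 g \<in> Rm m"
    unfolding gen_ideal_def by blast
  from assms(2) obtain F2 c2 where 2: "q = (\<Sum>g\<in>F2. c2 g * g)" "finite F2" "F2 \<subseteq> G" "\<forall>g\<in>F2. c2 g \<in> Rm m"
    unfolding gen_ideal_def by blast
  define c where "c g = (if g \<in> F1 then c1 g else 0) + (if g \<in> F2 then c2 g else 0)" for g
  have "p = (\<Sum>g\<in>F1 \<union> F2. (if g \<in> F1 then c1 g else 0) * g)"
    unfolding 1(1) using 1 2 by (intro sum.mono_neutral_cong_left) auto
  moreover have "q = (\<Sum>g\<in>F1 \<union> F2. (if g \<in> F2 then c2 g else 0) * g)"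
    unfolding 2(1) using 1 2 by (intro sum.mono_neutral_cong_left) auto
  ultimately have "p + q = (\<Sum>g\<in>F1 \<union> F2. c g * g)"
    by (simp add: c_def sum.distrib distrib_right)
  moreover have "\<forall>g\<in>F1 \<union> F2. c g \<in> Rm m"
    using 1 2 by (auto simp: c_def intro!: Rm_add)
  ultimately show ?thesis
    using 1 2 gi_intro[of "F1 \<union> F2" G c m] by simp
qed

lemma gi_mult:
  assumes "p \<in> gen_ideal m G" "r \<in> Rm m"
  shows "r * p \<in> gen_ideal m G"
proof -
  from assms(1) obtain F c where 1: "p = (\<Sum>g\<in>F. c g * g)" "finite F" "F \<subseteq> G" "\<forall>g\<in>F. c g \<in> Rm m"
    unfolding gen_ideal_def by blast
  have "r * p = (\<Sum>g\<in>F. (r * c g) * g)"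
    by (simp add: 1 sum_distrib_left mult.assoc)
  moreover have "\<forall>g\<in>F. r * c g \<in> Rm m" using 1 assms(2) by (auto intro: Rm_mult)
  ultimately show ?thesis using 1 gi_intro[of F G "\<lambda>g. r * c g" m] by simp
qed

lemma gi_diff:
  assumes "p \<in> gen_ideal m G" "q \<in> gen_ideal m G"
  shows "p - q \<in> gen_ideal m G"
  using gi_add[OF assms(1) gi_mult[OF assms(2) Rm_uminus[OF Rm_one]]] by simp

lemma gi_vanish:
  assumes "\<forall>g\<in>G. mpeval a g = 0" "p \<in> gen_ideal m G"
  shows "mpeval a p = 0"
proof -
  from assms(2) obtain F c where 1: "p = (\<Sum>g\<in>F. c g * g)" "F \<subseteq> G"
    unfolding gen_ideal_def by blast
  show ?thesis unfolding 1(1) mpeval_sum mpeval_mult using 1(2) assms(1)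
    by (intro sum.neutral) auto
qed

lemma gen_sub_sat:
  assumes "G \<subseteq> Rm m" "g \<in> G"
  shows "g \<in> sat m (gen_ideal m G) h"
proof -
  have "h ^ 0 * g \<in> gen_ideal m G" using gi_gen1[OF assms(2)] by simp
  then show ?thesis unfolding sat_def using assms by blast
qed

lemma sat_vanish:
  assumes "a \<in> Vm m (sat m (gen_ideal m G) h)" "G \<subseteq> Rm m" "g \<in> G"
  shows "mpeval a g = 0"
  using assms(1) gen_sub_sat[OF assms(2,3), of h] unfolding Vm_def by blast



definition arcE :: "nat \<Rightarrow> (jvar \<Rightarrow> 'k::comm_ring_1) \<Rightarrow> (nat \<Rightarrow> jvar) \<Rightarrow> 'k poly" where
  "arcE m a c = (\<Sum>i\<le>m. monom (a (c i)) i)"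

definition fE :: "nat \<Rightarrow> (jvar \<Rightarrow> 'k::comm_ring_1) \<Rightarrow> 'k poly" where
  "fE m a = arcE m a X ^ 2 + arcE m a Y ^ 2 * arcE m a Z + arcE m a Y * arcE m a Z ^ 2"

lemma coeff_arc: "coeff (arc m c) i = (if i \<le> m then Var (c i) else 0)"
  by (simp add: arc_def coeff_sum coeff_monom)

lemma coeff_arcE: "coeff (arcE m a c) i = (if i \<le> m then a (c i) else 0)"
  by (simp add: arcE_def coeff_sum coeff_monom)

lemma map_mpeval_mult:
  "map_poly (mpeval a) (P * Q) = map_poly (mpeval a) P * map_poly (mpeval a) Q"
  by (rule poly_eqI) (simp add: coeff_map_poly coeff_mult)

lemma map_mpeval_add:
  "map_poly (mpeval a) (P + Q) = map_poly (mpeval a) P + map_poly (mpeval a) Q"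
  by (rule poly_eqI) (simp add: coeff_map_poly)

lemma map_mpeval_power:
  "map_poly (mpeval a) (P ^ n) = map_poly (mpeval a) P ^ n"
  by (induction n) (auto simp: map_mpeval_mult)

lemma map_mpeval_arc: "map_poly (mpeval a) (arc m c) = arcE m a c"
  by (rule poly_eqI) (simp add: coeff_map_poly coeff_arc coeff_arcE)

lemma mpeval_fj: "mpeval a (fj m j) = coeff (fE m a) j"
proof -
  have "mpeval a (fj m j) = coeff (map_poly (mpeval a) (arc m X ^ 2 + arc m Y ^ 2 * arc m Z + arc m Y * arc m Z ^ 2)) j"
    by (simp add: fj_def coeff_map_poly)
  also have "\<dots> = coeff (fE m a) j"
    by (simp add: map_mpeval_add map_mpeval_mult map_mpeval_power map_mpeval_arc fE_def)
  finally show ?thesis .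
qed

definition pRm :: "nat \<Rightarrow> 'k::comm_ring_1 mpoly poly \<Rightarrow> bool" where
  "pRm m P = (\<forall>i. coeff P i \<in> Rm m)"

lemma pRm_add: "pRm m P \<Longrightarrow> pRm m Q \<Longrightarrow> pRm m (P + Q)"
  by (simp add: pRm_def Rm_add)

lemma pRm_mult: "pRm m P \<Longrightarrow> pRm m Q \<Longrightarrow> pRm m (P * Q)"
  by (simp add: pRm_def coeff_mult Rm_sum Rm_mult)

lemma pRm_power2: "pRm m P \<Longrightarrow> pRm m (P ^ 2)"
  by (simp add: power2_eq_square pRm_mult)

lemma pRm_arc: assumes "\<And>i. jidx (c i) = i" shows "pRm m (arc m c)"
proof -
  have "jidx (c i) \<le> m" if "i \<le> m" for i
    using that assms by simp
  then show ?thesis by (simp add: pRm_def coeff_arc Rm_Var)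
qed

lemma fj_Rm: "fj m j \<in> Rm m"
proof -
  have "pRm m (arc m X)" "pRm m (arc m Y)" "pRm m (arc m Z)" by (rule pRm_arc, simp)+
  then have "pRm m (arc m X ^ 2 + arc m Y ^ 2 * arc m Z + arc m Y * arc m Z ^ 2)"
    by (intro pRm_add pRm_mult pRm_power2)
  then show ?thesis unfolding fj_def pRm_def by blast
qed

lemma alg_closed_infinite: "infinite (UNIV :: 'k::alg_closed_field set)"
proof
  assume fin: "finite (UNIV :: 'k set)"
  define q :: "'k poly" where "q = (\<Prod>a\<in>UNIV. [:-a, 1:])"
  have dq: "degree q = card (UNIV :: 'k set)"
    unfolding q_def by (subst degree_prod_eq_sum_degree) auto
  have "card (UNIV :: 'k set) > 0" using fin by (simp add: card_gt_0_iff)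
  then have "degree (1 + q) = degree q" using dq by (intro degree_add_eq_right) auto
  then have "degree (1 + q) > 0" using dq \<open>card (UNIV :: 'k set) > 0\<close> by simp
  then obtain x where "poly (1 + q) x = 0" using alg_closed_imp_poly_has_root by blast
  moreover have "poly q x = 0"
    unfolding q_def poly_prod using fin by (intro prod_zero) (auto intro!: bexI[of _ x])
  ultimately show False by simp
qed

lemma curve_lemma:
  fixes A :: "jvar \<Rightarrow> 'k::field poly"
  assumes inf: "infinite (UNIV :: 'k set)"
    and g: "g \<in> sat m (gen_ideal m G) h"
    and kill: "\<And>s q. s \<noteq> 0 \<Longrightarrow> q \<in> G \<Longrightarrow> mpeval (\<lambda>v. poly (A v) s) q = 0"
    and nz: "\<And>s. s \<noteq> 0 \<Longrightarrow> mpeval (\<lambda>v. poly (A v) s) h \<noteq> 0"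
  shows "mpeval (\<lambda>v. poly (A v) 0) g = 0"
proof -
  from g obtain n where n: "h ^ n * g \<in> gen_ideal m G" unfolding sat_def by blast
  have "poly (evP A g) s = 0" if "s \<noteq> 0" for s
  proof -
    have "mpeval (\<lambda>v. poly (A v) s) (h ^ n * g) = 0"
      using gi_vanish[OF _ n] kill[OF that] by blast
    then show ?thesis using nz[OF that] by (simp add: poly_evP)
  qed
  then have "UNIV - {0} \<subseteq> {s. poly (evP A g) s = 0}" by blast
  moreover have "infinite (UNIV - {0 :: 'k})" using inf by simp
  ultimately have "infinite {s. poly (evP A g) s = 0}" using finite_subset by blast
  then have "evP A g = 0" using poly_roots_finite by blast
  then show ?thesis using poly_evP[of A g 0] by simp
qed



lemma sum_atMost5: "(\<Sum>i\<le>(5::nat). f i) = f 0 + f 1 + f 2 + f 3 + f 4 + (f 5 :: 'a::comm_monoid_add)"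
  by (simp add: numeral_eq_Suc atMost_Suc add_ac)

lemma fj5_full:
  assumes "5 \<le> m"
  shows "(fj m 5 :: 'k::comm_ring_1 mpoly) = (2 * Var (X 0) * Var (X 5) + 2 * Var (X 1) * Var (X 4) + 2 * Var (X 2) * Var (X 3) + Var (Y 0) * Var (Y 0) * Var (Z 5) + 2 * Var (Y 0) * Var (Y 1) * Var (Z 4) + 2 * Var (Y 0) * Var (Y 2) * Var (Z 3) + 2 * Var (Y 0) * Var (Y 3) * Var (Z 2) + 2 * Var (Y 0) * Var (Y 4) * Var (Z 1) + 2 * Var (Y 0) * Var (Y 5) * Var (Z 0) + 2 * Var (Y 0) * Var (Z 0) * Var (Z 5) + 2 * Var (Y 0) * Var (Z 1) * Var (Z 4) + 2 * Var (Y 0) * Var (Z 2) * Var (Z 3) + Var (Y 1) * Var (Y 1) * Var (Z 3) + 2 * Var (Y 1) * Var (Y 2) * Var (Z 2) + 2 * Var (Y 1) * Var (Y 3) * Var (Z 1) + 2 * Var (Y 1) * Var (Y 4) * Var (Z 0) + 2 * Var (Y 1) * Var (Z 0) * Var (Z 4) + 2 * Var (Y 1) * Var (Z 1) * Var (Z 3) + Var (Y 1) * Var (Z 2) * Var (Z 2) + Var (Y 2) * Var (Y 2) * Var (Z 1) + 2 * Var (Y 2) * Var (Y 3) * Var (Z 0) + 2 * Var (Y 2) * Var (Z 0) * Var (Z 3) + 2 * Var (Y 2) * Var (Z 1) * Var (Z 2) + 2 * Var (Y 3) * Var (Z 0) * Var (Z 2) + Var (Y 3) * Var (Z 1) * Var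 (Z 1) + 2 * Var (Y 4) * Var (Z 0) * Var (Z 1) + Var (Y 5) * Var (Z 0) * Var (Z 0))"
  using assms
  apply (simp add: fj_def power2_eq_square coeff_mult sum_atMost5 coeff_arc)
  apply (simp add: coeff_mult atMost_Suc numeral_eq_Suc coeff_arc)
  by (simp add: algebra_simps)

lemma two_mpoly: assumes "CHAR('k::comm_ring_1) = 2" shows "(2::'k mpoly) = 0"
proof -
  have "(2::'k) = 0" using of_nat_CHAR[where 'a='k] assms by simp
  then show ?thesis by (metis single_numeral single_zero)
qed

lemma g1_sat:
  assumes "CHAR('k::comm_ring_1) = 2" "5 \<le> m"
  shows "((Var (Y 2) * Var (Y 2) + Var (Y 3) * Var (Z 1)) :: 'k mpoly) \<in> sat m (Jm1 m) (Var (Z 1))"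
proof -
  have id: "(fj m 5 :: 'k mpoly) = (Var (Z 1)) * (Var (Y 2) * Var (Y 2) + Var (Y 3) * Var (Z 1)) + (Var (Y 0)) * (Var (Y 0) * Var (Z 5)) + (Var (Y 1)) * (Var (Y 1) * Var (Z 3) + Var (Z 2) * Var (Z 2)) + (Var (Z 0)) * (Var (Y 5) * Var (Z 0)) + 2 * (Var (X 0) * Var (X 5) + Var (X 1) * Var (X 4) + Var (X 2) * Var (X 3) + Var (Y 0) * Var (Y 1) * Var (Z 4) + Var (Y 0) * Var (Y 2) * Var (Z 3) + Var (Y 0) * Var (Y 3) * Var (Z 2) + Var (Y 0) * Var (Y 4) * Var (Z 1) + Var (Y 0) * Var (Y 5) * Var (Z 0) + Var (Y 0) * Var (Z 0) * Var (Z 5) + Var (Y 0) * Var (Z 1) * Var (Z 4) + Var (Y 0) * Var (Z 2) * Var (Z 3) + Var (Y 1) * Var (Y 2) * Var (Z 2) + Var (Y 1) * Var (Y 3) * Var (Z 1) + Var (Y 1) * Var (Y 4) * Var (Z 0) + Var (Y 1) * Var (Z 0) * Var (Z 4) + Var (Y 1) * Var (Z 1) * Var (Z 3) + Var (Y 2) * Var (Y 3) * Var (Z 0) + Var (Y 2) * Var (Z 0) * Var (Z 3) + Var (Y 2) * Var (Z 1) * Var (Z 2) + Var (Y 3) * Var (Z 0) * Var (Z 2) + Var (Y 4) * Var (Z 0) * Var (Z 1))"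
    unfolding fj5_full[OF assms(2)] by (simp add: algebra_simps)
  have eq: "(Var (Z 1)) ^ 1 * (Var (Y 2) * Var (Y 2) + Var (Y 3) * Var (Z 1)) = (fj m 5 :: 'k mpoly) - (Var (Y 0) * Var (Z 5)) * (Var (Y 0)) - (Var (Y 1) * Var (Z 3) + Var (Z 2) * Var (Z 2)) * (Var (Y 1)) - (Var (Y 5) * Var (Z 0)) * (Var (Z 0))"
    unfolding id using two_mpoly[OF assms(1)] by (simp add: algebra_simps)
  have "((Var (Z 1)) ^ 1 * (Var (Y 2) * Var (Y 2) + Var (Y 3) * Var (Z 1)) :: 'k mpoly) \<in> Jm1 m"
    unfolding eq Jm1_def using assms(2)
    by (intro gi_diff gi_gen gi_gen1 Rm_add Rm_mult Rm_Var) (auto simp: Fm_def)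
  moreover have "((Var (Y 2) * Var (Y 2) + Var (Y 3) * Var (Z 1)) :: 'k mpoly) \<in> Rm m" using assms(2) by (intro Rm_add Rm_mult Rm_Var) auto
  ultimately show ?thesis unfolding sat_def by blast
qed

lemma g2_sat:
  assumes "CHAR('k::comm_ring_1) = 2" "5 \<le> m"
  shows "((Var (Y 1) * Var (Z 3) + Var (Z 2) * Var (Z 2)) :: 'k mpoly) \<in> sat m (Jm2 m) (Var (Y 1))"
proof -
  have id: "(fj m 5 :: 'k mpoly) = (Var (Y 1)) * (Var (Y 1) * Var (Z 3) + Var (Z 2) * Var (Z 2)) + (Var (Y 0)) * (Var (Y 0) * Var (Z 5)) + (Var (Z 1)) * (Var (Y 2) * Var (Y 2) + Var (Y 3) * Var (Z 1)) + (Var (Z 0)) * (Var (Y 5) * Var (Z 0)) + 2 * (Var (X 0) * Var (X 5) + Var (X 1) * Var (X 4) + Var (X 2) * Var (X 3) + Var (Y 0) * Var (Y 1) * Var (Z 4) + Var (Y 0) * Var (Y 2) * Var (Z 3) + Var (Y 0) * Var (Y 3) * Var (Z 2) + Var (Y 0) * Var (Y 4) * Var (Z 1) + Var (Y 0) * Var (Y 5) * Var (Z 0) + Var (Y 0) * Var (Z 0) * Var (Z 5) + Var (Y 0) * Var (Z 1) * Var (Z 4) + Var (Y 0) * Var (Z 2) * Var (Z 3) + Var (Y 1) * Var (Y 2) * Var (Z 2) + Var (Y 1) * Var (Y 3) * Var (Z 1) + Var (Y 1) * Var (Y 4) * Var (Z 0) + Var (Y 1) * Var (Z 0) * Var (Z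 4) + Var (Y 1) * Var (Z 1) * Var (Z 3) + Var (Y 2) * Var (Y 3) * Var (Z 0) + Var (Y 2) * Var (Z 0) * Var (Z 3) + Var (Y 2) * Var (Z 1) * Var (Z 2) + Var (Y 3) * Var (Z 0) * Var (Z 2) + Var (Y 4) * Var (Z 0) * Var (Z 1))"
    unfolding fj5_full[OF assms(2)] by (simp add: algebra_simps)
  have eq: "(Var (Y 1)) ^ 1 * (Var (Y 1) * Var (Z 3) + Var (Z 2) * Var (Z 2)) = (fj m 5 :: 'k mpoly) - (Var (Y 0) * Var (Z 5)) * (Var (Y 0)) - (Var (Y 2) * Var (Y 2) + Var (Y 3) * Var (Z 1)) * (Var (Z 1)) - (Var (Y 5) * Var (Z 0)) * (Var (Z 0))"
    unfolding id using two_mpoly[OF assms(1)] by (simp add: algebra_simps)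
  have "((Var (Y 1)) ^ 1 * (Var (Y 1) * Var (Z 3) + Var (Z 2) * Var (Z 2)) :: 'k mpoly) \<in> Jm2 m"
    unfolding eq Jm2_def using assms(2)
    by (intro gi_diff gi_gen gi_gen1 Rm_add Rm_mult Rm_Var) (auto simp: Fm_def)
  moreover have "((Var (Y 1) * Var (Z 3) + Var (Z 2) * Var (Z 2)) :: 'k mpoly) \<in> Rm m" using assms(2) by (intro Rm_add Rm_mult Rm_Var) auto
  ultimately show ?thesis unfolding sat_def by blast
qed

lemma g3_sat:
  assumes "CHAR('k::comm_ring_1) = 2" "5 \<le> m"
  shows "((Var (Y 1) * Var (Y 3) + Var (Y 1) * Var (Z 3) + Var (Y 2) * Var (Y 2) + Var (Z 2) * Var (Z 2)) :: 'k mpoly) \<in> sat m (Jm3 m) (Var (Y 1))"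
proof -
  have id: "(fj m 5 :: 'k mpoly) = (Var (Y 1)) * (Var (Y 1) * Var (Y 3) + Var (Y 1) * Var (Z 3) + Var (Y 2) * Var (Y 2) + Var (Z 2) * Var (Z 2)) + (Var (Y 0)) * (Var (Y 0) * Var (Z 5)) + (Var (Y 1) + Var (Z 1)) * (Var (Y 1) * Var (Y 3) + Var (Y 2) * Var (Y 2) + Var (Y 3) * Var (Z 1)) + (Var (Z 0)) * (Var (Y 5) * Var (Z 0)) + 2 * (Var (X 0) * Var (X 5) + Var (X 1) * Var (X 4) + Var (X 2) * Var (X 3) + Var (Y 0) * Var (Y 1) * Var (Z 4) + Var (Y 0) * Var (Y 2) * Var (Z 3) + Var (Y 0) * Var (Y 3) * Var (Z 2) + Var (Y 0) * Var (Y 4) * Var (Z 1) + Var (Y 0) * Var (Y 5) * Var (Z 0) + Var (Y 0) * Var (Z 0) * Var (Z 5) + Var (Y 0) * Var (Z 1) * Var (Z 4) + Var (Y 0) * Var (Z 2) * Var (Z 3) - Var (Y 1) * Var (Y 1) * Var (Y 3) - Var (Y 1) * Var (Y 2) * Var (Y 2) + Var (Y 1) * Var (Y 2) * Var (Z 2) + Var (Y 1) * Var (Y 4) * Var (Z 0) + Var (Y 1) * Var (Z 0) * Var (Z 4) + Var (Y 1) * Var (Z 1) * Var (Z 3) + Var (Y 2) * Var (Y 3) * Var (Z 0) + Var (Y 2) * Var (Z 0) * Var (Z 3) + Var (Y 2) * Var (Z 1) * Var (Z 2) + Var (Y 3) * Var (Z 0) * Var (Z 2) + Var (Y 4) * Var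 (Z 0) * Var (Z 1))"
    unfolding fj5_full[OF assms(2)] by (simp add: algebra_simps)
  have eq: "(Var (Y 1)) ^ 1 * (Var (Y 1) * Var (Y 3) + Var (Y 1) * Var (Z 3) + Var (Y 2) * Var (Y 2) + Var (Z 2) * Var (Z 2)) = (fj m 5 :: 'k mpoly) - (Var (Y 0) * Var (Z 5)) * (Var (Y 0)) - (Var (Y 1) * Var (Y 3) + Var (Y 2) * Var (Y 2) + Var (Y 3) * Var (Z 1)) * (Var (Y 1) + Var (Z 1)) - (Var (Y 5) * Var (Z 0)) * (Var (Z 0))"
    unfolding id using two_mpoly[OF assms(1)] by (simp add: algebra_simps)
  have "((Var (Y 1)) ^ 1 * (Var (Y 1) * Var (Y 3) + Var (Y 1) * Var (Z 3) + Var (Y 2) * Var (Y 2) + Var (Z 2) * Var (Z 2)) :: 'k mpoly) \<in> Jm3 m"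
    unfolding eq Jm3_def using assms(2)
    by (intro gi_diff gi_gen gi_gen1 Rm_add Rm_mult Rm_Var) (auto simp: Fm_def)
  moreover have "((Var (Y 1) * Var (Y 3) + Var (Y 1) * Var (Z 3) + Var (Y 2) * Var (Y 2) + Var (Z 2) * Var (Z 2)) :: 'k mpoly) \<in> Rm m" using assms(2) by (intro Rm_add Rm_mult Rm_Var) auto
  ultimately show ?thesis unfolding sat_def by blast
qed



lemma Zm1_facts:
  assumes "a \<in> Zm m 1" "5 \<le> m"
  shows "a \<in> Am m" "a (X 0) = 0" "a (X 1) = 0" "a (Y 0) = 0" "a (Y 1) = 0" "a (Z 0) = 0"
    "\<And>j. j \<le> m \<Longrightarrow> mpeval a (fj m j) = 0"
proof -
  let ?G = "{Var (X 0), Var (X 1), Var (Y 0), Var (Y 1), Var (Z 0)} \<union> Fm m"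
  have a: "a \<in> Vm m (sat m (gen_ideal m ?G) (Var (Z 1)))"
    using assms(1) by (simp add: Zm_def Im_def Jm1_def)
  have G: "?G \<subseteq> Rm m" using assms(2) by (auto simp: Fm_def fj_Rm intro!: Rm_Var)
  have V: "\<forall>g\<in>?G. mpeval a g = 0" using sat_vanish[OF a G] by blast
  show "a \<in> Am m" using a by (simp add: Vm_def)
  show "a (X 0) = 0" "a (X 1) = 0" "a (Y 0) = 0" "a (Y 1) = 0" "a (Z 0) = 0"
    using V by simp_all
  show "\<And>j. j \<le> m \<Longrightarrow> mpeval a (fj m j) = 0"
    using V by (auto simp: Fm_def)
qed

lemma Zm2_facts:
  assumes "a \<in> Zm m 2" "5 \<le> m"
  shows "a \<in> Am m" "a (X 0) = 0" "a (X 1) = 0" "a (Y 0) = 0" "a (Z 0) = 0" "a (Z 1) = 0"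
    "\<And>j. j \<le> m \<Longrightarrow> mpeval a (fj m j) = 0"
proof -
  let ?G = "{Var (X 0), Var (X 1), Var (Y 0), Var (Z 0), Var (Z 1)} \<union> Fm m"
  have a: "a \<in> Vm m (sat m (gen_ideal m ?G) (Var (Y 1)))"
    using assms(1) by (simp add: Zm_def Im_def Jm2_def)
  have G: "?G \<subseteq> Rm m" using assms(2) by (auto simp: Fm_def fj_Rm intro!: Rm_Var)
  have V: "\<forall>g\<in>?G. mpeval a g = 0" using sat_vanish[OF a G] by blast
  show "a \<in> Am m" using a by (simp add: Vm_def)
  show "a (X 0) = 0" "a (X 1) = 0" "a (Y 0) = 0" "a (Z 0) = 0" "a (Z 1) = 0"
    using V by simp_all
  show "\<And>j. j \<le> m \<Longrightarrow> mpeval a (fj m j) = 0"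
    using V by (auto simp: Fm_def)
qed

lemma Zm3_facts:
  assumes "a \<in> Zm m 3" "5 \<le> m"
  shows "a \<in> Am m" "a (X 0) = 0" "a (X 1) = 0" "a (Y 0) = 0" "a (Z 0) = 0" "a (Y 1) + a (Z 1) = 0"
    "\<And>j. j \<le> m \<Longrightarrow> mpeval a (fj m j) = 0"
proof -
  let ?G = "{Var (X 0), Var (X 1), Var (Y 0), Var (Z 0), Var (Y 1) + Var (Z 1)} \<union> Fm m"
  have a: "a \<in> Vm m (sat m (gen_ideal m ?G) (Var (Y 1)))"
    using assms(1) by (simp add: Zm_def Im_def Jm3_def)
  have G: "?G \<subseteq> Rm m" using assms(2) by (auto simp: Fm_def fj_Rm intro!: Rm_Var Rm_add)
  have V: "\<forall>g\<in>?G. mpeval a g = 0" using sat_vanish[OF a G] by blast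
  show "a \<in> Am m" using a by (simp add: Vm_def)
  show "a (X 0) = 0" "a (X 1) = 0" "a (Y 0) = 0" "a (Z 0) = 0" "a (Y 1) + a (Z 1) = 0"
    using V by simp_all
  show "\<And>j. j \<le> m \<Longrightarrow> mpeval a (fj m j) = 0"
    using V by (auto simp: Fm_def)
qed

lemma Zm0_intro:
  assumes "a \<in> Am m" "a (X 0) = 0" "a (X 1) = 0" "a (X 2) = 0" "a (Y 0) = 0" "a (Y 1) = 0"
    "a (Z 0) = 0" "a (Z 1) = 0" "\<And>j. j \<le> m \<Longrightarrow> mpeval a (fj m j) = 0"
  shows "a \<in> Zm m 0"
proof -
  let ?G = "{Var (X 0), Var (X 1), Var (X 2), Var (Y 0), Var (Y 1), Var (Z 0), Var (Z 1)} \<union> Fm m"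
  have "\<forall>g\<in>?G. mpeval a g = (0::'a)" using assms by (auto simp: Fm_def)
  then have "\<forall>p\<in>gen_ideal m ?G. mpeval a p = 0" using gi_vanish by blast
  then show ?thesis unfolding Zm_def Im_def Im0_def Vm_def using assms(1) by simp
qed

lemma x2_zero:
  fixes a :: "jvar \<Rightarrow> 'k::field"
  assumes "a (X 0) = 0" "a (X 1) = 0" "a (Y 0) = 0" "a (Y 1) = 0" "a (Z 0) = 0" "a (Z 1) = 0"
    "mpeval a (fj m 4) = 0" "5 \<le> m"
  shows "a (X 2) = 0"
proof -
  have "coeff (fE m a) 4 = a (X 2) * a (X 2)"
    using assms by (simp add: fE_def power2_eq_square coeff_mult coeff_arcE numeral_eq_Suc atMost_Suc)
  then show ?thesis using assms(7) by (simp add: mpeval_fj)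
qed



lemma arcE_zero: "(\<And>i. a (c i) = 0) \<Longrightarrow> arcE m a c = 0"
  by (simp add: arcE_def)

lemma arcE_eq: "(\<And>i. a (c i) = a (d i)) \<Longrightarrow> arcE m a c = arcE m a d"
  by (simp add: arcE_def)

lemma fE_zero:
  fixes a :: "jvar \<Rightarrow> 'k::comm_ring_1"
  assumes "CHAR('k) = 2" "\<And>i. a (X i) = 0"
    and "(\<forall>i. a (Y i) = 0) \<or> (\<forall>i. a (Z i) = 0) \<or> (\<forall>i. a (Y i) = a (Z i))"
  shows "fE m a = 0"
proof -
  have x: "arcE m a X = 0" using assms(2) by (rule arcE_zero)
  have two: "(2::'k) = 0" using of_nat_CHAR[where 'a='k] assms(1) by simp
  have cube: "A ^ 2 * A + A * A ^ 2 = 0" for A :: "'k poly"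
  proof -
    have e1: "A ^ 2 * A + A * A ^ 2 = A ^ 3 + A ^ 3" by (simp add: power2_eq_square power3_eq_cube mult_ac)
    have e2: "A ^ 3 + A ^ 3 = smult (1 + 1) (A ^ 3)" by (simp only: smult_add_left smult_1_left)
    have e3: "(1 + 1 :: 'k) = 0" using two by (metis one_add_one)
    show ?thesis using e1 e2 e3 by simp
  qed
  from assms(3) show ?thesis
  proof (elim disjE)
    assume "\<forall>i. a (Y i) = 0"
    then have "arcE m a Y = 0" by (intro arcE_zero) auto
    then show ?thesis using x by (simp add: fE_def)
  next
    assume "\<forall>i. a (Z i) = 0"
    then have "arcE m a Z = 0" by (intro arcE_zero) auto
    then show ?thesis using x by (simp add: fE_def)
  next
    assume "\<forall>i. a (Y i) = a (Z i)"
    then have "arcE m a Y = arcE m a Z" by (intro arcE_eq) auto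
    then show ?thesis using x cube by (simp add: fE_def)
  qed
qed



lemma in_Vsat:
  fixes A :: "jvar \<Rightarrow> 'k::alg_closed_field poly"
  assumes "a0 \<in> Am m" "\<And>v. poly (A v) 0 = a0 v"
    and "\<And>s q. s \<noteq> 0 \<Longrightarrow> q \<in> G \<Longrightarrow> mpeval (\<lambda>v. poly (A v) s) q = 0"
    and "\<And>s. s \<noteq> 0 \<Longrightarrow> mpeval (\<lambda>v. poly (A v) s) h \<noteq> 0"
  shows "a0 \<in> Vm m (sat m (gen_ideal m G) h)"
proof -
  have "(\<lambda>v. poly (A v) 0) = a0" using assms(2) by auto
  then have "mpeval a0 g = 0" if "g \<in> sat m (gen_ideal m G) h" for g
    using curve_lemma[OF alg_closed_infinite that assms(3) assms(4)] by simp
  then show ?thesis using assms(1) by (simp add: Vm_def)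
qed

definition pt1 :: "jvar \<Rightarrow> 'k::comm_ring_1" where "pt1 v = (if v = Z 2 then 1 else 0)"
definition pt2 :: "jvar \<Rightarrow> 'k::comm_ring_1" where "pt2 v = (if v = Y 2 then 1 else 0)"
definition pt3 :: "jvar \<Rightarrow> 'k::comm_ring_1" where "pt3 v = (if v = Y 2 \<or> v = Z 2 then 1 else 0)"

lemma pt_Am: "2 \<le> m \<Longrightarrow> pt1 \<in> Am m" "2 \<le> m \<Longrightarrow> pt2 \<in> Am m" "2 \<le> m \<Longrightarrow> pt3 \<in> Am m"
  by (auto simp: Am_def pt1_def pt2_def pt3_def)

lemma pt_Z0:
  fixes dummy :: "'k::alg_closed_field"
  assumes "CHAR('k) = 2" "5 \<le> m"
  shows "(pt1 :: jvar \<Rightarrow> 'k) \<in> Zm m 0" "(pt2 :: jvar \<Rightarrow> 'k) \<in> Zm m 0" "(pt3 :: jvar \<Rightarrow> 'k) \<in> Zm m 0"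
proof -
  have "fE m (pt1 :: jvar \<Rightarrow> 'k) = 0" by (rule fE_zero[OF assms(1)]) (auto simp: pt1_def)
  then show "(pt1 :: jvar \<Rightarrow> 'k) \<in> Zm m 0" using assms pt_Am[of m] \<open>5 \<le> m\<close>
    by (intro Zm0_intro) (auto simp: pt1_def mpeval_fj)
  have "fE m (pt2 :: jvar \<Rightarrow> 'k) = 0" by (rule fE_zero[OF assms(1)]) (auto simp: pt2_def)
  then show "(pt2 :: jvar \<Rightarrow> 'k) \<in> Zm m 0" using assms pt_Am[of m] \<open>5 \<le> m\<close>
    by (intro Zm0_intro) (auto simp: pt2_def mpeval_fj)
  have "fE m (pt3 :: jvar \<Rightarrow> 'k) = 0" by (rule fE_zero[OF assms(1)]) (auto simp: pt3_def)
  then show "(pt3 :: jvar \<Rightarrow> 'k) \<in> Zm m 0" using assms pt_Am[of m] \<open>5 \<le> m\<close>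
    by (intro Zm0_intro) (auto simp: pt3_def mpeval_fj)
qed

lemma pt1_Z1:
  fixes dummy :: "'k::alg_closed_field"
  assumes "CHAR('k) = 2" "5 \<le> m"
  shows "(pt1 :: jvar \<Rightarrow> 'k) \<in> Zm m 1"
proof -
  define A :: "jvar \<Rightarrow> 'k poly" where "A v = (if v = Z 2 then 1 else if v = Z 1 then [:0, 1:] else 0)" for v
  have "(pt1 :: jvar \<Rightarrow> 'k) \<in> Vm m (sat m (Jm1 m) (Var (Z 1)))"
    unfolding Jm1_def
  proof (rule in_Vsat[where A=A])
    show "pt1 \<in> Am m" using pt_Am[of m] assms(2) by simp
    show "poly (A v) 0 = pt1 v" for v by (simp add: A_def pt1_def)
    show "mpeval (\<lambda>v. poly (A v) s) (Var (Z 1)) \<noteq> 0" if "s \<noteq> 0" for s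
      using that by (simp add: A_def)
    fix s :: 'k and q :: "'k mpoly" assume s: "s \<noteq> 0" and q: "q \<in> {Var (X 0), Var (X 1), Var (Y 0), Var (Y 1), Var (Z 0)} \<union> Fm m"
    have "fE m (\<lambda>v. poly (A v) s) = 0" by (rule fE_zero[OF assms(1)]) (auto simp: A_def)
    then show "mpeval (\<lambda>v. poly (A v) s) q = 0" using q by (auto simp: A_def Fm_def mpeval_fj)
  qed
  then show ?thesis by (simp add: Zm_def Im_def)
qed

lemma pt2_Z2:
  fixes dummy :: "'k::alg_closed_field"
  assumes "CHAR('k) = 2" "5 \<le> m"
  shows "(pt2 :: jvar \<Rightarrow> 'k) \<in> Zm m 2"
proof -
  define A :: "jvar \<Rightarrow> 'k poly" where "A v = (if v = Y 2 then 1 else if v = Y 1 then [:0, 1:] else 0)" for v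
  have "(pt2 :: jvar \<Rightarrow> 'k) \<in> Vm m (sat m (Jm2 m) (Var (Y 1)))"
    unfolding Jm2_def
  proof (rule in_Vsat[where A=A])
    show "pt2 \<in> Am m" using pt_Am[of m] assms(2) by simp
    show "poly (A v) 0 = pt2 v" for v by (simp add: A_def pt2_def)
    show "mpeval (\<lambda>v. poly (A v) s) (Var (Y 1)) \<noteq> 0" if "s \<noteq> 0" for s
      using that by (simp add: A_def)
    fix s :: 'k and q :: "'k mpoly" assume s: "s \<noteq> 0" and q: "q \<in> {Var (X 0), Var (X 1), Var (Y 0), Var (Z 0), Var (Z 1)} \<union> Fm m"
    have "fE m (\<lambda>v. poly (A v) s) = 0" by (rule fE_zero[OF assms(1)]) (auto simp: A_def)
    then show "mpeval (\<lambda>v. poly (A v) s) q = 0" using q by (auto simp: A_def Fm_def mpeval_fj)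
  qed
  then show ?thesis by (simp add: Zm_def Im_def)
qed

lemma pt3_Z3:
  fixes dummy :: "'k::alg_closed_field"
  assumes "CHAR('k) = 2" "5 \<le> m"
  shows "(pt3 :: jvar \<Rightarrow> 'k) \<in> Zm m 3"
proof -
  define A :: "jvar \<Rightarrow> 'k poly" where
    "A v = (if v = Y 2 \<or> v = Z 2 then 1 else if v = Y 1 \<or> v = Z 1 then [:0, 1:] else 0)" for v
  have two: "(2::'k) = 0" using of_nat_CHAR[where 'a='k] assms(1) by simp
  have "(pt3 :: jvar \<Rightarrow> 'k) \<in> Vm m (sat m (Jm3 m) (Var (Y 1)))"
    unfolding Jm3_def
  proof (rule in_Vsat[where A=A])
    show "pt3 \<in> Am m" using pt_Am[of m] assms(2) by simp
    show "poly (A v) 0 = pt3 v" for v by (simp add: A_def pt3_def)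
    show "mpeval (\<lambda>v. poly (A v) s) (Var (Y 1)) \<noteq> 0" if "s \<noteq> 0" for s
      using that by (simp add: A_def)
    fix s :: 'k and q :: "'k mpoly" assume s: "s \<noteq> 0" and q: "q \<in> {Var (X 0), Var (X 1), Var (Y 0), Var (Z 0), Var (Y 1) + Var (Z 1)} \<union> Fm m"
    have "fE m (\<lambda>v. poly (A v) s) = 0" by (rule fE_zero[OF assms(1)]) (auto simp: A_def)
    moreover have "s + s = 0" using two by (metis mult_2 mult_zero_left)
    ultimately show "mpeval (\<lambda>v. poly (A v) s) q = 0" using q by (auto simp: A_def Fm_def mpeval_fj)
  qed
  then show ?thesis by (simp add: Zm_def Im_def)
qed

lemma Zm_sat:
  "Zm m 1 = Vm m (sat m (Jm1 m) (Var (Z 1)))"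
  "Zm m 2 = Vm m (sat m (Jm2 m) (Var (Y 1)))"
  "Zm m 3 = Vm m (sat m (Jm3 m) (Var (Y 1)))"
  by (simp_all add: Zm_def Im_def)

lemma Vm_vanish: "a \<in> Vm m S \<Longrightarrow> g \<in> S \<Longrightarrow> mpeval a g = 0"
  by (simp add: Vm_def)

lemma pt_notin:
  fixes dummy :: "'k::alg_closed_field"
  assumes "CHAR('k) = 2" "5 \<le> m"
  shows "(pt1 :: jvar \<Rightarrow> 'k) \<notin> Zm m 2" "(pt1 :: jvar \<Rightarrow> 'k) \<notin> Zm m 3"
    "(pt2 :: jvar \<Rightarrow> 'k) \<notin> Zm m 1" "(pt2 :: jvar \<Rightarrow> 'k) \<notin> Zm m 3"
    "(pt3 :: jvar \<Rightarrow> 'k) \<notin> Zm m 1" "(pt3 :: jvar \<Rightarrow> 'k) \<notin> Zm m 2"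
proof -
  note g1 = g1_sat[OF assms] and g2 = g2_sat[OF assms] and g3 = g3_sat[OF assms]
  show "(pt1 :: jvar \<Rightarrow> 'k) \<notin> Zm m 2"
  proof
    assume "(pt1 :: jvar \<Rightarrow> 'k) \<in> Zm m 2"
    from Vm_vanish[OF this[unfolded Zm_sat] g2] show False by (simp add: pt1_def)
  qed
  show "(pt1 :: jvar \<Rightarrow> 'k) \<notin> Zm m 3"
  proof
    assume "(pt1 :: jvar \<Rightarrow> 'k) \<in> Zm m 3"
    from Vm_vanish[OF this[unfolded Zm_sat] g3] show False by (simp add: pt1_def)
  qed
  show "(pt2 :: jvar \<Rightarrow> 'k) \<notin> Zm m 1"
  proof
    assume "(pt2 :: jvar \<Rightarrow> 'k) \<in> Zm m 1"
    from Vm_vanish[OF this[unfolded Zm_sat] g1] show False by (simp add: pt2_def)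
  qed
  show "(pt2 :: jvar \<Rightarrow> 'k) \<notin> Zm m 3"
  proof
    assume "(pt2 :: jvar \<Rightarrow> 'k) \<in> Zm m 3"
    from Vm_vanish[OF this[unfolded Zm_sat] g3] show False by (simp add: pt2_def)
  qed
  show "(pt3 :: jvar \<Rightarrow> 'k) \<notin> Zm m 1"
  proof
    assume "(pt3 :: jvar \<Rightarrow> 'k) \<in> Zm m 1"
    from Vm_vanish[OF this[unfolded Zm_sat] g1] show False by (simp add: pt3_def)
  qed
  show "(pt3 :: jvar \<Rightarrow> 'k) \<notin> Zm m 2"
  proof
    assume "(pt3 :: jvar \<Rightarrow> 'k) \<in> Zm m 2"
    from Vm_vanish[OF this[unfolded Zm_sat] g2] show False by (simp add: pt3_def)
  qed
qed



lemma inter_Z0: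
  fixes dummy :: "'k::field"
  assumes "5 \<le> m"
  shows "(Zm m 1 :: (jvar \<Rightarrow> 'k) set) \<inter> Zm m 2 \<subseteq> Zm m 0"
    "(Zm m 2 :: (jvar \<Rightarrow> 'k) set) \<inter> Zm m 3 \<subseteq> Zm m 0"
    "(Zm m 3 :: (jvar \<Rightarrow> 'k) set) \<inter> Zm m 1 \<subseteq> Zm m 0"
proof -
  show "(Zm m 1 :: (jvar \<Rightarrow> 'k) set) \<inter> Zm m 2 \<subseteq> Zm m 0"
  proof
    fix a :: "jvar \<Rightarrow> 'k" assume "a \<in> Zm m 1 \<inter> Zm m 2"
    then have a1: "a \<in> Zm m 1" and a2: "a \<in> Zm m 2" by auto
    note f1 = Zm1_facts[OF a1 assms] and f2 = Zm2_facts[OF a2 assms]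
    have fj4: "mpeval a (fj m 4) = 0" by (rule f1(7)) (use assms in simp)
    have x2: "a (X 2) = 0" by (rule x2_zero[OF f1(2) f1(3) f1(4) f1(5) f1(6) f2(6) fj4 assms])
    show "a \<in> Zm m 0" by (rule Zm0_intro[OF f1(1) f1(2) f1(3) x2 f1(4) f1(5) f1(6) f2(6) f1(7)])
  qed
  show "(Zm m 2 :: (jvar \<Rightarrow> 'k) set) \<inter> Zm m 3 \<subseteq> Zm m 0"
  proof
    fix a :: "jvar \<Rightarrow> 'k" assume "a \<in> Zm m 2 \<inter> Zm m 3"
    then have a2: "a \<in> Zm m 2" and a3: "a \<in> Zm m 3" by auto
    note f2 = Zm2_facts[OF a2 assms] and f3 = Zm3_facts[OF a3 assms]
    have y1: "a (Y 1) = 0" using f2(6) f3(6) by simp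
    have fj4: "mpeval a (fj m 4) = 0" by (rule f2(7)) (use assms in simp)
    have x2: "a (X 2) = 0" by (rule x2_zero[OF f2(2) f2(3) f2(4) y1 f2(5) f2(6) fj4 assms])
    show "a \<in> Zm m 0" by (rule Zm0_intro[OF f2(1) f2(2) f2(3) x2 f2(4) y1 f2(5) f2(6) f2(7)])
  qed
  show "(Zm m 3 :: (jvar \<Rightarrow> 'k) set) \<inter> Zm m 1 \<subseteq> Zm m 0"
  proof
    fix a :: "jvar \<Rightarrow> 'k" assume "a \<in> Zm m 3 \<inter> Zm m 1"
    then have a3: "a \<in> Zm m 3" and a1: "a \<in> Zm m 1" by auto
    note f1 = Zm1_facts[OF a1 assms] and f3 = Zm3_facts[OF a3 assms]
    have z1: "a (Z 1) = 0" using f1(5) f3(6) by simp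
    have fj4: "mpeval a (fj m 4) = 0" by (rule f1(7)) (use assms in simp)
    have x2: "a (X 2) = 0" by (rule x2_zero[OF f1(2) f1(3) f1(4) f1(5) f1(6) z1 fj4 assms])
    show "a \<in> Zm m 0" by (rule Zm0_intro[OF f1(1) f1(2) f1(3) x2 f1(4) f1(5) f1(6) z1 f1(7)])
  qed
qed

theorem theorem3p8:
  fixes m :: nat
  assumes "CHAR('k::alg_closed_field) = 2"
    and "m \<ge> 5"
  defines "W \<equiv> (Zm m :: nat \<Rightarrow> (jvar \<Rightarrow> 'k) set)"
  defines "P \<equiv> {W i \<inter> W j | i j. i < 4 \<and> j < 4 \<and> i \<noteq> j}"
  shows "{A \<in> P. \<not> (\<exists>B\<in>P. A \<subset> B)} = {W 0 \<inter> W 1, W 0 \<inter> W 2, W 0 \<inter> W 3}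
     \<and> W 0 \<inter> W 1 \<noteq> W 0 \<inter> W 2 \<and> W 0 \<inter> W 2 \<noteq> W 0 \<inter> W 3 \<and> W 0 \<inter> W 1 \<noteq> W 0 \<inter> W 3
     \<and> W 1 \<inter> W 2 \<subset> W 0 \<and> W 2 \<inter> W 3 \<subset> W 0 \<and> W 3 \<inter> W 1 \<subset> W 0"
proof -
  have m5: "5 \<le> m" using assms(2) by simp
  note I = inter_Z0[OF m5, where 'k='k, folded W_def]
  have a1: "pt1 \<in> W 0" "pt1 \<in> W 1" "pt1 \<notin> W 2" "pt1 \<notin> W 3"
    using pt_Z0[OF assms(1) m5] pt1_Z1[OF assms(1) m5] pt_notin[OF assms(1) m5] unfolding W_def by auto
  have a2: "pt2 \<in> W 0" "pt2 \<in> W 2" "pt2 \<notin> W 1" "pt2 \<notin> W 3"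
    using pt_Z0[OF assms(1) m5] pt2_Z2[OF assms(1) m5] pt_notin[OF assms(1) m5] unfolding W_def by auto
  have a3: "pt3 \<in> W 0" "pt3 \<in> W 3" "pt3 \<notin> W 1" "pt3 \<notin> W 2"
    using pt_Z0[OF assms(1) m5] pt3_Z3[OF assms(1) m5] pt_notin[OF assms(1) m5] unfolding W_def by auto
  have four: "i < (4::nat) \<longleftrightarrow> i = 0 \<or> i = 1 \<or> i = 2 \<or> i = 3" for i by auto
  have Peq: "P = {W 0 \<inter> W 1, W 0 \<inter> W 2, W 0 \<inter> W 3, W 1 \<inter> W 2, W 3 \<inter> W 1, W 2 \<inter> W 3}"
  proof (rule equalityI)
    show "P \<subseteq> {W 0 \<inter> W 1, W 0 \<inter> W 2, W 0 \<inter> W 3, W 1 \<inter> W 2, W 3 \<inter> W 1, W 2 \<inter> W 3}"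
      unfolding P_def four by (auto simp: Int_commute)
    have Pin: "W i \<inter> W j \<in> P" if "i < 4" "j < 4" "i \<noteq> j" for i j
      using that unfolding P_def by blast
    show "{W 0 \<inter> W 1, W 0 \<inter> W 2, W 0 \<inter> W 3, W 1 \<inter> W 2, W 3 \<inter> W 1, W 2 \<inter> W 3} \<subseteq> P"
      using Pin[of 0 1] Pin[of 0 2] Pin[of 0 3] Pin[of 1 2] Pin[of 3 1] Pin[of 2 3] by simp
  qed
  let ?M = "{A \<in> P. \<not> (\<exists>B\<in>P. A \<subset> B)}"
  have s12: "W 1 \<inter> W 2 \<subset> W 0 \<inter> W 1" using I(1) a1 by blast
  have s23: "W 2 \<inter> W 3 \<subset> W 0 \<inter> W 2" using I(2) a2 by blast
  have s31: "W 3 \<inter> W 1 \<subset> W 0 \<inter> W 3" using I(3) a3 by blast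
  have m1: "W 0 \<inter> W 1 \<in> ?M"
  proof -
    have "\<not> W 0 \<inter> W 1 \<subset> B" if "B \<in> P" for B
      using that a1 unfolding Peq by blast
    then show ?thesis unfolding Peq by blast
  qed
  have m2: "W 0 \<inter> W 2 \<in> ?M"
  proof -
    have "\<not> W 0 \<inter> W 2 \<subset> B" if "B \<in> P" for B
      using that a2 unfolding Peq by blast
    then show ?thesis unfolding Peq by blast
  qed
  have m3: "W 0 \<inter> W 3 \<in> ?M"
  proof -
    have "\<not> W 0 \<inter> W 3 \<subset> B" if "B \<in> P" for B
      using that a3 unfolding Peq by blast
    then show ?thesis unfolding Peq by blast
  qed
  have n12: "W 1 \<inter> W 2 \<notin> ?M" using s12 unfolding Peq by blast
  have n23: "W 2 \<inter> W 3 \<notin> ?M" using s23 unfolding Peq by blast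
  have n31: "W 3 \<inter> W 1 \<notin> ?M" using s31 unfolding Peq by blast
  have "?M = {W 0 \<inter> W 1, W 0 \<inter> W 2, W 0 \<inter> W 3}"
  proof
    show "?M \<subseteq> {W 0 \<inter> W 1, W 0 \<inter> W 2, W 0 \<inter> W 3}"
    proof
      fix A assume A: "A \<in> ?M"
      then have "A \<in> P" by simp
      then show "A \<in> {W 0 \<inter> W 1, W 0 \<inter> W 2, W 0 \<inter> W 3}"
        using A n12 n23 n31 unfolding Peq by blast
    qed
    show "{W 0 \<inter> W 1, W 0 \<inter> W 2, W 0 \<inter> W 3} \<subseteq> ?M" using m1 m2 m3 by blast
  qed
  moreover have "W 0 \<inter> W 1 \<noteq> W 0 \<inter> W 2" using a1 by blast
  moreover have "W 0 \<inter> W 2 \<noteq> W 0 \<inter> W 3" using a2 by blast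
  moreover have "W 0 \<inter> W 1 \<noteq> W 0 \<inter> W 3" using a1 by blast
  moreover have "W 1 \<inter> W 2 \<subset> W 0" using I(1) a1 by blast
  moreover have "W 2 \<inter> W 3 \<subset> W 0" using I(2) a2 by blast
  moreover have "W 3 \<inter> W 1 \<subset> W 0" using I(3) a3 by blast
  ultimately show ?thesis by blast
qed

end
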